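(* Let $F\in\mathcal L_n$ be real with $\|F\|_{\mathsf E}\le1$, $F\not\equiv 0$, and let $D^0=(F)_0+D_n^\infty-(F)_\infty$ be its generalized zero divisor. Then every alternation set of $F$ has at most $n+1-D^0(x_* )$ points.
   Context: Let $\mathsf E\subset\overline{\mathbb R}$ be compact, proper, with infinitely many points. Cyclic order: $(t_0,\dots,t_m)$, $m\ge2$, is cyclically ordered if it has no repetitions and some $f\in\mathrm{PSL}(2,\mathbb R)$ has $f(t_0)=\infty$, $f(t_1)<\dots<f(t_m)$; $(a,b)=\{c:(a,c,b)\text{ cyclically ordered}\}$, $[a,b)=(a,b)\cup\{a\}$. Divisors are finitely supported $D:\overline{\mathbb C}\to\mathbb Z$; for rational $f$, $(f)_\infty$, $(f)_0$ are the polar and zero divisors (both $0$ if $f$ is constant); $\mathcal L(D)=\{f\text{ rational}:(f)_\infty\le D\}$. Fix $n\ge1$, an integral divisor $D_n^\infty\ge0$ of degree $n$ supported in $\overline{\mathbb R}\setminus\mathsf E$, $x_*\in\overline{\mathbb R}\setminus\mathsf E$, $\mathcal L_n=\mathcal L(D_n^\infty)$, $\|F\|_{\mathsf E}=\sup_{\mathsf E}|F|$. Real means $F(\bar z)=\overline{F(z)}$. Sign function: $S_n(x)=\sum_{\mathbf c\ne x_*}D_n^\infty(\mathbf c)\chi_{[x_*,\mathbf c)}(x)$. An alternation set of $F$ is a set of distinct points $x_1,\dots,x_m\in\mathsf E$ with $(x_*,x_1,\dots,x_m)$ cyclically ordered and $F(x_j)=(-1)^{m-j-S_n(x_j)}$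 for all $j$. *)

theory Defs
  imports "HOL-Analysis.Analysis" "HOL-Computational_Algebra.Polynomial" "HOL-Computational_Algebra.Fraction_Field"
begin

text \<open>The extended real line is modelled as real option (None is the point at infinity),
  the Riemann sphere as complex option (None is infinity).\<close>

type_synonym ereal_pt = "real option"
type_synonym sphere_pt = "complex option"

definition emb :: "real option \<Rightarrow> complex option" where
  "emb x = map_option complex_of_real x"

text \<open>Compactness in the one-point compactification of the real line.\<close>
definition compact_ext :: "real option set \<Rightarrow> bool" where
  "compact_ext E \<longleftrightarrow> closed {x. Some x \<in> E} \<and> (None \<notin> E \<longrightarrow> bounded {x. Some x \<in> E})"

definition moeb :: "real \<Rightarrow> real \<Rightarrow> real \<Rightarrow> real \<Rightarrow> real option \<Rightarrow> real option" where
  "moeb a b c d t = (case t of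
      None \<Rightarrow> (if c = 0 then None else Some (a / c))
    | Some x \<Rightarrow> (if c * x + d = 0 then None else Some ((a * x + b) / (c * x + d))))"

definition cyc_ordered :: "real option list \<Rightarrow> bool" where
  "cyc_ordered ts \<longleftrightarrow> distinct ts \<and> ts \<noteq> [] \<and>
     (\<exists>a b c d. a * d - b * c = 1 \<and> moeb a b c d (hd ts) = None \<and>
        (\<exists>ys. map (moeb a b c d) (tl ts) = map Some ys \<and> sorted_wrt (<) ys))"

definition open_arc :: "real option \<Rightarrow> real option \<Rightarrow> real option set" where
  "open_arc a b = {c. cyc_ordered [a, c, b]}"

definition halfopen_arc :: "real option \<Rightarrow> real option \<Rightarrow> real option set" where
  "halfopen_arc a b = insert a (open_arc a b)"

type_synonym ratfun = "complex poly fract"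

text \<open>A reduced representation: F = p/q with q monic and p, q without common zero.
  Such a representation exists and is unique for every element of C(z).\<close>
definition rf_rep :: "ratfun \<Rightarrow> complex poly \<times> complex poly" where
  "rf_rep F = (SOME (p, q). q \<noteq> 0 \<and> lead_coeff q = 1 \<and> F = Fraction_Field.Fract p q \<and>
      (\<forall>w. \<not> (poly p w = 0 \<and> poly q w = 0)))"

definition num :: "ratfun \<Rightarrow> complex poly" where "num F = fst (rf_rep F)"
definition den :: "ratfun \<Rightarrow> complex poly" where "den F = snd (rf_rep F)"

definition rf_eval :: "ratfun \<Rightarrow> complex option \<Rightarrow> complex option" where
  "rf_eval F z = (case z of
      Some w \<Rightarrow> (if poly (den F) w = 0 then None else Some (poly (num F) w / poly (den F) w))
    | None \<Rightarrow> (if degree (num F) > degree (den F) then None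
              else if degree (num F) < degree (den F) then Some 0
              else Some (lead_coeff (num F) / lead_coeff (den F))))"

definition rf_real :: "ratfun \<Rightarrow> bool" where
  "rf_real F \<longleftrightarrow> (\<forall>w. rf_eval F (Some (cnj w)) = map_option cnj (rf_eval F (Some w)))"

definition rf_const :: "ratfun \<Rightarrow> bool" where
  "rf_const F \<longleftrightarrow> (\<exists>c. F = Fraction_Field.Fract [:c:] 1)"

definition rf_ord :: "ratfun \<Rightarrow> complex option \<Rightarrow> int" where
  "rf_ord F z = (case z of
      Some w \<Rightarrow> int (order w (num F)) - int (order w (den F))
    | None \<Rightarrow> int (degree (den F)) - int (degree (num F)))"

type_synonym divisor = "complex option \<Rightarrow> int"

definition zero_div :: "ratfun \<Rightarrow> divisor" where
  "zero_div F z = (if rf_const F then 0 else max 0 (rf_ord F z))"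

definition polar_div :: "ratfun \<Rightarrow> divisor" where
  "polar_div F z = (if rf_const F then 0 else max 0 (- rf_ord F z))"

definition Lspace :: "divisor \<Rightarrow> ratfun set" where
  "Lspace D = {F. \<forall>z. polar_div F z \<le> D z}"

definition deg_div :: "divisor \<Rightarrow> int" where
  "deg_div D = (\<Sum>z\<in>{z. D z \<noteq> 0}. D z)"

text \<open>S_n(x) = sum over c distinct from x_* of D(c) times the indicator of [x_*, c) at x.
  D is supported on the extended real line, so the sum ranges over real points.\<close>
definition sign_fun :: "divisor \<Rightarrow> real option \<Rightarrow> real option \<Rightarrow> int" where
  "sign_fun D xs x = (\<Sum>c\<in>{c. D (emb c) \<noteq> 0 \<and> c \<noteq> xs}.
       D (emb c) * (if x \<in> halfopen_arc xs c then 1 else 0))"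

definition alternation_set ::
  "real option set \<Rightarrow> divisor \<Rightarrow> real option \<Rightarrow> ratfun \<Rightarrow> real option list \<Rightarrow> bool" where
  "alternation_set E D xs F pts \<longleftrightarrow>
     distinct pts \<and> set pts \<subseteq> E \<and> cyc_ordered (xs # pts) \<and>
     (\<forall>j < length pts. rf_eval F (emb (pts ! j)) =
        Some (complex_of_real ((-1) powi (int (length pts) - int (j + 1) - sign_fun D xs (pts ! j)))))"

end

theory Submission
  imports Defs "HOL-Computational_Algebra.Polynomial_Factorial" "HOL-Computational_Algebra.Field_as_Ring" "HOL-Computational_Algebra.Fundamental_Theorem_Algebra"
begin


definition reduced :: "complex poly \<Rightarrow> complex poly \<Rightarrow> bool" where
  "reduced p q \<longleftrightarrow> q \<noteq> 0 \<and> lead_coeff q = 1 \<and> (\<forall>w. \<not> (poly p w = 0 \<and> poly q w = 0))"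

lemma reduced_coprime: assumes "reduced p q" shows "coprime p q"
proof (rule ccontr)
  assume nc: "\<not> coprime p q"
  have gnz: "gcd p q \<noteq> 0" using assms by (auto simp: reduced_def)
  have "\<not> is_unit (gcd p q)" using nc is_unit_gcd by blast
  hence "degree (gcd p q) \<noteq> 0" using gnz is_unit_iff_degree by blast
  hence "\<not> constant (poly (gcd p q))" by (simp add: constant_degree)
  then obtain z where "poly (gcd p q) z = 0" using fundamental_theorem_of_algebra by blast
  hence "poly p z = 0" "poly q z = 0"
    by (meson dvd_trans gcd_dvd1 gcd_dvd2 poly_eq_0_iff_dvd)+
  thus False using assms by (auto simp: reduced_def)
qed

lemma reduced_exists: "\<exists>p q. reduced p q \<and> F = Fract p q"
proof -
  obtain a b where F: "F = Fract a b" "b \<noteq> 0" by (cases F)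
  define g where "g = gcd a b"
  have g0: "g \<noteq> 0" using F by (simp add: g_def)
  obtain a' where a': "a = a' * g" unfolding g_def by (metis dvd_div_mult_self gcd_dvd1)
  obtain b' where b': "b = b' * g" unfolding g_def by (metis dvd_div_mult_self gcd_dvd2)
  have cop: "coprime a' b'" using gcd_coprime[OF _ a'[unfolded g_def] b'[unfolded g_def]] g0 g_def by simp
  have b'0: "b' \<noteq> 0" using F b' by auto
  define c where "c = lead_coeff b'"
  have c0: "c \<noteq> 0" using b'0 by (simp add: c_def)
  define p where "p = smult (1/c) a'"
  define q where "q = smult (1/c) b'"
  have "reduced p q"
    unfolding reduced_def
  proof (intro conjI allI)
    show "q \<noteq> 0" using b'0 c0 by (simp add: q_def)
    show "lead_coeff q = 1" using c0 by (simp add: q_def c_def lead_coeff_smult)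
    fix w show "\<not> (poly p w = 0 \<and> poly q w = 0)"
    proof
      assume "poly p w = 0 \<and> poly q w = 0"
      hence "poly a' w = 0" "poly b' w = 0" using c0 by (auto simp: p_def q_def)
      hence "[:-w,1:] dvd a'" "[:-w,1:] dvd b'" by (auto simp: poly_eq_0_iff_dvd)
      hence "is_unit [:-w,1:]" using cop coprime_common_divisor by blast
      thus False by (simp add: is_unit_iff_degree)
    qed
  qed
  moreover have "F = Fract p q"
    using F a' b' c0 b'0 g0 by (simp add: eq_fract p_def q_def mult_ac)
  ultimately show ?thesis by blast
qed

lemma reduced_unique:
  assumes "reduced p q" "reduced p' q'" "Fract p q = Fract p' q'"
  shows "p = p' \<and> q = q'"
proof -
  have q0: "q \<noteq> 0" "q' \<noteq> 0" using assms by (auto simp: reduced_def)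
  have eq: "p * q' = p' * q" using assms(3) q0 by (simp add: eq_fract)
  have c1: "coprime q p" "coprime q' p'" using reduced_coprime assms(1,2) by (auto simp: coprime_commute)
  have "q dvd p * q'" by (simp add: eq)
  hence d1: "q dvd q'" using c1(1) by (simp add: coprime_dvd_mult_right_iff)
  have "q' dvd p' * q" by (simp add: eq[symmetric])
  hence d2: "q' dvd q" using c1(2) by (simp add: coprime_dvd_mult_right_iff)
  have "normalize q = normalize q'" using d1 d2 associated_iff_dvd by blast
  moreover have "normalize q = q" "normalize q' = q'" using assms by (auto simp: reduced_def normalize_poly_def one_pCons[symmetric])
  ultimately have qq: "q = q'" by simp
  with eq q0 have "p = p'" by simp
  with qq show ?thesis by simp
qed


section \<open>Real polynomials: signs\<close>

lemma pinfty_sign: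
  fixes P :: "real poly" assumes "P \<noteq> 0"
  shows "\<exists>y. \<forall>z\<ge>y. sgn (poly P z) = sgn (lead_coeff P)"
proof (cases "lead_coeff P > 0")
  case True
  then obtain n where "\<forall>x\<ge>n. poly P x \<ge> lead_coeff P" using poly_pinfty_gt_lc by blast
  thus ?thesis using True by (intro exI[of _ n]) auto
next
  case False
  hence "lead_coeff P < 0" using leading_coeff_neq_0[OF assms] by linarith
  hence "lead_coeff (-P) > 0" by (simp add: lead_coeff_minus)
  then obtain n where "\<forall>x\<ge>n. poly (-P) x \<ge> lead_coeff (-P)" using poly_pinfty_gt_lc by blast
  hence "\<forall>x\<ge>n. poly P x \<le> lead_coeff P" by (simp add: lead_coeff_minus)
  hence "\<forall>x\<ge>n. sgn (poly P x) = sgn (lead_coeff P)" using \<open>lead_coeff P < 0\<close>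
    by (metis le_less_trans sgn_neg)
  thus ?thesis by blast
qed

lemma order_lin: "order s [:-r,1:] = (if s = r then 1 else (0::nat))"
proof (cases "s = r")
  case True thus ?thesis using order_power_n_n[of r 1] by simp
next
  case False thus ?thesis by (simp add: order_0I)
qed

lemma root_split_sum:
  fixes P Q :: "real poly"
  assumes PQ: "P = [:-r,1:] * Q" and Q0: "Q \<noteq> 0" and r: "r \<in> S"
    and S: "S = {s. poly P s = 0 \<and> C s}" and S': "S' = {s. poly Q s = 0 \<and> C s}"
  shows "(\<Sum>s\<in>S. order s P) = 1 + (\<Sum>s\<in>S'. order s Q)"
proof -
  have P0: "P \<noteq> 0" using PQ Q0 by (metis mult_eq_0_iff one_neq_zero pCons_eq_0_iff)
  have fin: "finite S" unfolding S using poly_roots_finite[OF P0] by (rule finite_subset[rotated]) auto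
  have sub: "S' \<subseteq> S" using PQ S S' by auto
  have ordP: "order s P = (if s = r then 1 else 0) + order s Q" for s
    using PQ P0 order_mult[of "[:-r,1:]" Q s] by (simp del: mult_pCons_left add: order_lin)
  have "(\<Sum>s\<in>S. order s P) = (\<Sum>s\<in>S. (if s = r then 1 else 0)) + (\<Sum>s\<in>S. order s Q)"
    by (simp add: ordP sum.distrib)
  also have "(\<Sum>s\<in>S. (if s = r then 1 else 0::nat)) = 1"
    using fin r by simp
  also have "(\<Sum>s\<in>S. order s Q) = (\<Sum>s\<in>S'. order s Q)"
    by (rule sum.mono_neutral_right[OF fin sub]) (use Q0 in \<open>auto simp: S S' order_root\<close>)
  finally show ?thesis .
qed

lemma sgn_poly_right:
  fixes P :: "real poly"
  shows "P \<noteq> 0 \<Longrightarrow> poly P x \<noteq> 0 \<Longrightarrow>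
    sgn (poly P x) = sgn (lead_coeff P) * (-1) ^ (\<Sum>r\<in>{r. poly P r = 0 \<and> x < r}. order r P)"
proof (induction "degree P" arbitrary: P rule: less_induct)
  case (less P)
  show ?case
  proof (cases "\<exists>r. poly P r = 0 \<and> x < r")
    case True
    then obtain r where r: "poly P r = 0" "x < r" by blast
    then obtain Q where PQ: "P = [:-r,1:] * Q" using poly_eq_0_iff_dvd by (metis dvdE)
    have Q0: "Q \<noteq> 0" using less.prems PQ by auto
    have dP: "degree P = Suc (degree Q)" using PQ Q0 degree_mult_eq[of "[:-r,1:]" Q] by (simp del: mult_pCons_left)
    hence dQ: "degree Q < degree P" by simp
    have Qx: "poly Q x \<noteq> 0" using less.prems(2) PQ by simp
    have IH: "sgn (poly Q x) = sgn (lead_coeff Q) * (-1) ^ (\<Sum>r\<in>{r. poly Q r = 0 \<and> x < r}. order r Q)"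
      using less.hyps[OF dQ Q0 Qx] .
    have lc: "lead_coeff P = lead_coeff Q" using PQ lead_coeff_mult[of "[:-r,1:]" Q] by (simp del: mult_pCons_left)
    have sum: "(\<Sum>s\<in>{r. poly P r = 0 \<and> x < r}. order s P) = 1 + (\<Sum>s\<in>{r. poly Q r = 0 \<and> x < r}. order s Q)"
      by (rule root_split_sum[OF PQ Q0]) (use r in auto)
    have "sgn (poly P x) = sgn (x - r) * sgn (poly Q x)" using PQ by (simp del: mult_pCons_left add: sgn_mult)
    also have "sgn (x - r) = -1" using r by simp
    finally show ?thesis using IH lc sum by simp
  next
    case False
    hence e: "{r. poly P r = 0 \<and> x < r} = {}" by auto
    obtain y0 where y0: "\<forall>z\<ge>y0. sgn (poly P z) = sgn (lead_coeff P)" using pinfty_sign[OF less.prems(1)] by blast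
    define y where "y = max y0 (x+1)"
    have sy: "sgn (poly P y) = sgn (lead_coeff P)" using y0 by (simp add: y_def)
    have xy: "x < y" by (simp add: y_def)
    have "sgn (poly P x) = sgn (poly P y)"
    proof (rule ccontr)
      assume ne: "sgn (poly P x) \<noteq> sgn (poly P y)"
      have "poly P y \<noteq> 0" using sy less.prems(1) by (auto simp: sgn_0_0)
      hence "poly P x * poly P y < 0" using ne less.prems(2)
        by (metis linorder_neqE_linordered_idom mult_neg_pos mult_pos_neg sgn_neg sgn_pos)
      then obtain z where "z > x" "z < y" "poly P z = 0" using poly_IVT[OF xy] by blast
      thus False using False by blast
    qed
    thus ?thesis using sy unfolding e by simp
  qed
qed

lemma minfty_sign:
  fixes P :: "real poly" assumes "P \<noteq> 0"
  shows "\<exists>y. \<forall>z\<le>y. sgn (poly P z) = sgn (lead_coeff P) * (-1) ^ degree P"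
proof -
  define Pm where "Pm = pcompose P [:0,-1:]"
  have lc: "lead_coeff Pm = lead_coeff P * (-1) ^ degree P"
    unfolding Pm_def by (subst lead_coeff_comp) auto
  have "Pm \<noteq> 0" using lc leading_coeff_neq_0[OF assms] by (metis leading_coeff_0_iff mult_eq_0_iff power_eq_0_iff zero_neq_neg_one)
  then obtain y where y: "\<forall>z\<ge>y. sgn (poly Pm z) = sgn (lead_coeff Pm)" using pinfty_sign by blast
  have "sgn (poly P z) = sgn (lead_coeff P) * (-1) ^ degree P" if "z \<le> -y" for z
  proof -
    have "sgn (poly Pm (-z)) = sgn (lead_coeff Pm)" using y that by auto
    moreover have "poly Pm (-z) = poly P z" by (simp add: Pm_def poly_pcompose)
    ultimately show ?thesis using lc by (simp add: sgn_mult)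
  qed
  thus ?thesis by blast
qed

lemma sgn_poly_left:
  fixes P :: "real poly"
  shows "P \<noteq> 0 \<Longrightarrow> poly P x \<noteq> 0 \<Longrightarrow>
    sgn (poly P x) = sgn (lead_coeff P) * (-1) ^ degree P * (-1) ^ (\<Sum>r\<in>{r. poly P r = 0 \<and> r < x}. order r P)"
proof (induction "degree P" arbitrary: P rule: less_induct)
  case (less P)
  show ?case
  proof (cases "\<exists>r. poly P r = 0 \<and> r < x")
    case True
    then obtain r where r: "poly P r = 0" "r < x" by blast
    then obtain Q where PQ: "P = [:-r,1:] * Q" using poly_eq_0_iff_dvd by (metis dvdE)
    have Q0: "Q \<noteq> 0" using less.prems PQ by auto
    have dP: "degree P = Suc (degree Q)" using PQ Q0 degree_mult_eq[of "[:-r,1:]" Q] by (simp del: mult_pCons_left)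
    hence dQ: "degree Q < degree P" by simp
    have Qx: "poly Q x \<noteq> 0" using less.prems(2) PQ by simp
    have IH: "sgn (poly Q x) = sgn (lead_coeff Q) * (-1) ^ degree Q * (-1) ^ (\<Sum>r\<in>{r. poly Q r = 0 \<and> r < x}. order r Q)"
      using less.hyps[OF dQ Q0 Qx] .
    have lc: "lead_coeff P = lead_coeff Q" using PQ lead_coeff_mult[of "[:-r,1:]" Q] by (simp del: mult_pCons_left)
    have sum: "(\<Sum>s\<in>{r. poly P r = 0 \<and> r < x}. order s P) = 1 + (\<Sum>s\<in>{r. poly Q r = 0 \<and> r < x}. order s Q)"
      by (rule root_split_sum[OF PQ Q0]) (use r in auto)
    have "sgn (poly P x) = sgn (x - r) * sgn (poly Q x)" using PQ by (simp del: mult_pCons_left add: sgn_mult)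
    also have "sgn (x - r) = 1" using r by simp
    finally show ?thesis using IH lc sum dP by simp
  next
    case False
    hence e: "{r. poly P r = 0 \<and> r < x} = {}" by auto
    obtain y0 where y0: "\<forall>z\<le>y0. sgn (poly P z) = sgn (lead_coeff P) * (-1) ^ degree P"
      using minfty_sign[OF less.prems(1)] by blast
    define y where "y = min y0 (x-1)"
    have sy: "sgn (poly P y) = sgn (lead_coeff P) * (-1) ^ degree P" using y0 by (simp add: y_def)
    have xy: "y < x" by (simp add: y_def)
    have "sgn (poly P x) = sgn (poly P y)"
    proof (rule ccontr)
      assume ne: "sgn (poly P x) \<noteq> sgn (poly P y)"
      have "poly P y \<noteq> 0" using sy less.prems(1) by (auto simp: sgn_0_0)
      hence "poly P y * poly P x < 0" using ne less.prems(2)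
        by (metis linorder_neqE_linordered_idom mult_neg_pos mult_pos_neg sgn_neg sgn_pos)
      then obtain z where "z > y" "z < x" "poly P z = 0" using poly_IVT[OF xy] by blast
      thus False using False by blast
    qed
    thus ?thesis using sy unfolding e by simp
  qed
qed


section \<open>Numerator and denominator\<close>

lemma num_den: "reduced (num F) (den F) \<and> F = Fraction_Field.Fract (num F) (den F)"
proof -
  from reduced_exists obtain p q where pq: "reduced p q \<and> F = Fraction_Field.Fract p q" by blast
  hence "\<exists>pq. (case pq of (p, q) \<Rightarrow> q \<noteq> 0 \<and> lead_coeff q = 1 \<and> F = Fraction_Field.Fract p q \<and>
      (\<forall>w. \<not> (poly p w = 0 \<and> poly q w = 0)))"
    by (intro exI[of _ "(p,q)"]) (auto simp: reduced_def)
  hence "case rf_rep F of (p, q) \<Rightarrow> q \<noteq> 0 \<and> lead_coeff q = 1 \<and> F = Fraction_Field.Fract p q \<and>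
      (\<forall>w. \<not> (poly p w = 0 \<and> poly q w = 0))"
    unfolding rf_rep_def by (rule someI_ex)
  thus ?thesis by (auto simp: num_def den_def reduced_def split: prod.splits)
qed

lemma num_den_eq: "reduced p q \<Longrightarrow> F = Fraction_Field.Fract p q \<Longrightarrow> num F = p \<and> den F = q"
  using reduced_unique[of "num F" "den F" p q] num_den[of F] by auto

lemma num_nz: assumes "F \<noteq> 0" shows "num F \<noteq> 0"
proof
  assume "num F = 0"
  hence "F = Fraction_Field.Fract 0 (den F)" using num_den[of F] by simp
  thus False using assms by (simp add: fract_collapse)
qed

lemma den_nz: "den F \<noteq> 0" and den_monic: "lead_coeff (den F) = 1"
  and num_den_noroot: "\<not> (poly (num F) w = 0 \<and> poly (den F) w = 0)"
  using num_den[of F] by (auto simp: reduced_def)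

lemma real_coeffs:
  assumes "rf_real F"
  shows "\<forall>i. coeff (num F) i \<in> \<real>" "\<forall>i. coeff (den F) i \<in> \<real>"
proof -
  define p where "p = num F"
  define q where "q = den F"
  have red: "reduced p q" and Fpq: "F = Fraction_Field.Fract p q" using num_den[of F] by (auto simp: p_def q_def)
  define p' where "p' = map_poly cnj p"
  define q' where "q' = map_poly cnj q"
  have q0: "q \<noteq> 0" using red by (simp add: reduced_def)
  have cq': "coeff q' i = cnj (coeff q i)" for i by (simp add: q'_def coeff_map_poly)
  have cp': "coeff p' i = cnj (coeff p i)" for i by (simp add: p'_def coeff_map_poly)
  have dq': "degree q' = degree q" unfolding q'_def by (rule map_poly_degree_eq) (use q0 in simp)
  have lq': "lead_coeff q' = 1" using red by (simp add: dq' cq' reduced_def)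
  have q'0: "q' \<noteq> 0" using lq' by auto
  have pp': "poly p' w = cnj (poly p (cnj w))" for w by (simp add: p'_def)
  have qq': "poly q' w = cnj (poly q (cnj w))" for w by (simp add: q'_def)
  have nr: "\<not> (poly p w = 0 \<and> poly q w = 0)" for w using red unfolding reduced_def by blast
  have red': "reduced p' q'"
    unfolding reduced_def
  proof (intro conjI q'0 lq' allI)
    fix w show "\<not> (poly p' w = 0 \<and> poly q' w = 0)" using nr[of "cnj w"] unfolding pp' qq' by simp
  qed
  have key: "poly p w * poly q' w = poly p' w * poly q w" if "poly q w \<noteq> 0" "poly q (cnj w) \<noteq> 0" for w
  proof -
    have "rf_eval F (Some (cnj (cnj w))) = map_option cnj (rf_eval F (Some (cnj w)))"
      using assms unfolding rf_real_def by blast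
    hence "Some (poly p w / poly q w) = Some (cnj (poly p (cnj w) / poly q (cnj w)))"
      using that unfolding rf_eval_def p_def[symmetric] q_def[symmetric] by simp
    hence "poly p w / poly q w = poly p' w / poly q' w" unfolding pp' qq' by simp
    moreover have "poly q' w \<noteq> 0" using that(2) unfolding qq' by simp
    ultimately show ?thesis using that(1) by (simp add: divide_eq_eq)
  qed
  have "p * q' - p' * q = 0"
  proof (rule ccontr)
    assume ne: "p * q' - p' * q \<noteq> 0"
    have fin: "finite {w. poly (p*q' - p'*q) w = 0}" by (rule poly_roots_finite[OF ne])
    have "{w. poly q w \<noteq> 0 \<and> poly q' w \<noteq> 0} \<subseteq> {w. poly (p*q' - p'*q) w = 0}"
    proof
      fix w assume "w \<in> {w. poly q w \<noteq> 0 \<and> poly q' w \<noteq> 0}"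
      hence "poly q w \<noteq> 0" "poly q (cnj w) \<noteq> 0" unfolding qq' by auto
      from key[OF this] show "w \<in> {w. poly (p*q' - p'*q) w = 0}" by simp
    qed
    hence f1: "finite {w. poly q w \<noteq> 0 \<and> poly q' w \<noteq> 0}" using fin finite_subset by blast
    have f2: "finite {w. poly q w = 0}" "finite {w. poly q' w = 0}"
      using poly_roots_finite q0 q'0 by auto
    have "finite ({w. poly q w \<noteq> 0 \<and> poly q' w \<noteq> 0} \<union> {w. poly q w = 0} \<union> {w. poly q' w = 0})"
      using f1 f2 by blast
    moreover have "{w. poly q w \<noteq> 0 \<and> poly q' w \<noteq> 0} \<union> {w. poly q w = 0} \<union> {w. poly q' w = 0} = UNIV" by blast
    ultimately have "finite (UNIV :: complex set)" by simp
    thus False by (simp add: infinite_UNIV_char_0)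
  qed
  hence "Fraction_Field.Fract p' q' = Fraction_Field.Fract p q" using q0 q'0 by (simp add: eq_fract mult.commute)
  hence "p' = p \<and> q' = q" using reduced_unique[OF red' red] by blast
  hence "coeff p i = cnj (coeff p i)" "coeff q i = cnj (coeff q i)" for i using cp' cq' by auto
  thus "\<forall>i. coeff (num F) i \<in> \<real>" "\<forall>i. coeff (den F) i \<in> \<real>"
    by (auto simp: p_def q_def Reals_cnj_iff)
qed



section \<open>Real polynomials embedded in complex ones\<close>

abbreviation ofr :: "real poly \<Rightarrow> complex poly" where "ofr \<equiv> map_poly complex_of_real"

lemma ofr_Re: assumes "\<forall>i. coeff p i \<in> \<real>" shows "ofr (map_poly Re p) = p"
  by (rule poly_eqI) (use assms in \<open>simp add: coeff_map_poly\<close>)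

lemma poly_ofr: "poly (ofr P) (of_real x) = of_real (poly P x)"
  by (induction P) (auto simp: map_poly_pCons)

lemma ofr_add: "ofr (P + Q) = ofr P + ofr Q"
  by (rule poly_eqI) (simp add: coeff_map_poly)

lemma ofr_mult: "ofr (P * Q) = ofr P * ofr Q"
  by (rule poly_eqI) (simp add: coeff_map_poly coeff_mult)

lemma ofr_power: "ofr (P ^ n) = ofr P ^ n"
proof (induction n)
  case 0
  have "ofr 1 = 1" by (rule poly_eqI) (simp add: coeff_map_poly coeff_1)
  thus ?case by simp
qed (simp add: ofr_mult)

lemma ofr_lin: "ofr [:-r,1:] = [:- complex_of_real r, 1:]"
  by (simp add: map_poly_pCons)

lemma ofr_eq0: "ofr P = 0 \<longleftrightarrow> P = 0"
  by (simp add: map_poly_eq_0_iff)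

lemma degree_ofr: "degree (ofr P) = degree P"
  by (cases "P = 0") (auto intro!: map_poly_degree_eq)

lemma lead_ofr: "lead_coeff (ofr P) = of_real (lead_coeff P)"
  by (simp add: degree_ofr coeff_map_poly)

lemma order_ofr: assumes "P \<noteq> 0" shows "order (complex_of_real r) (ofr P) = order r P"
proof -
  obtain S where S: "P = [:-r,1:] ^ order r P * S" "\<not> [:-r,1:] dvd S" using order_decomp[OF assms] by blast
  have S0: "S \<noteq> 0" using S assms by auto
  have "poly S r \<noteq> 0" using S(2) by (simp add: poly_eq_0_iff_dvd)
  hence nr: "poly (ofr S) (of_real r) \<noteq> 0" by (simp add: poly_ofr)
  have "ofr P = [:- complex_of_real r, 1:] ^ order r P * ofr S"
    by (subst S(1)) (simp del: mult_pCons_left add: ofr_mult ofr_power ofr_lin)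
  moreover have "ofr S \<noteq> 0" using S0 ofr_eq0 by blast
  ultimately show ?thesis using nr
    by (simp del: mult_pCons_left add: order_mult order_power_n_n order_0I)
qed

lemma sum_order_complex:
  fixes p :: "complex poly"
  assumes "p \<noteq> 0" "finite V" "{w. poly p w = 0} \<subseteq> V"
  shows "(\<Sum>w\<in>V. order w p) = degree p"
proof -
  have "(\<Sum>w\<in>V. order w p) = (\<Sum>w\<in>{w. poly p w = 0}. order w p)"
    by (rule sum.mono_neutral_right[OF assms(2,3)]) (auto simp: order_0I)
  also have "\<dots> = (\<Sum>w\<in>set_mset (proots p). count (proots p) w)" using assms(1) by simp
  also have "\<dots> = size (proots p)" by (simp add: size_multiset_overloaded_eq)
  also have "\<dots> = degree p" by (rule size_proots_complex)
  finally show ?thesis .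
qed


section \<open>Cyclic order via a canonical coordinate\<close>

definition kc :: "real \<Rightarrow> real \<Rightarrow> real" where "kc c x = -1 / (x - c)"

definition key :: "real option \<Rightarrow> real option \<Rightarrow> real" where
  "key xs t = (case xs of None \<Rightarrow> (case t of None \<Rightarrow> 0 | Some x \<Rightarrow> x)
     | Some c \<Rightarrow> (case t of None \<Rightarrow> 0 | Some x \<Rightarrow> kc c x))"

lemma moeb_affine:
  assumes det: "a * d - b * c = 1" and inf: "moeb a b c d xs = None"
  shows "\<exists>\<alpha> \<beta>. \<alpha> > 0 \<and> (\<forall>t. t \<noteq> xs \<longrightarrow> moeb a b c d t = Some (\<alpha> * key xs t + \<beta>))"
proof (cases xs)
  case None
  hence c0: "c = 0" using inf by (auto simp: moeb_def split: if_splits)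
  hence ad: "a * d = 1" using det by simp
  hence d0: "d \<noteq> 0" by auto
  have pos: "a / d > 0"
  proof -
    have "a / d = (a * d) / (d * d)" using d0 by (simp add: field_simps)
    moreover have "0 < d * d" using d0 by (auto simp: zero_less_mult_iff linorder_neq_iff)
    ultimately show ?thesis using ad by simp
  qed
  have "moeb a b c d t = Some (a / d * key xs t + b / d)" if tx: "t \<noteq> xs" for t
  proof -
    obtain x where t: "t = Some x" using tx None by (cases t) auto
    show ?thesis using c0 d0 None t by (simp add: moeb_def key_def add_divide_distrib)
  qed
  thus ?thesis using pos by blast
next
  case (Some x0)
  hence cx: "c * x0 + d = 0" using inf by (auto simp: moeb_def split: if_splits)
  have c0: "c \<noteq> 0"
  proof
    assume "c = 0" hence "d = 0" using cx by simp
    thus False using det \<open>c = 0\<close> by simp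
  qed
  have dd: "d = - c * x0" using cx by simp
  have bb: "b = - a * x0 - 1 / c" using det c0 unfolding dd by (simp add: field_simps) 
  have "moeb a b c d t = Some (1 / c^2 * key xs t + a / c)" if "t \<noteq> xs" for t
  proof (cases t)
    case None thus ?thesis using c0 Some by (simp add: moeb_def key_def)
  next
    case (Some x)
    hence x: "x \<noteq> x0" using that \<open>xs = Some x0\<close> by auto
    hence "c * x + d \<noteq> 0" using c0 dd by (simp add: algebra_simps)
    moreover have "(a * x + b) / (c * x + d) = 1 / c^2 * (-1 / (x - x0)) + a / c"
      using c0 x unfolding bb dd by (simp add: field_simps power2_eq_square)
    ultimately show ?thesis using Some \<open>xs = Some x0\<close> by (simp add: moeb_def key_def kc_def)
  qed
  moreover have "1 / c^2 > 0" using c0 by simp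
  ultimately show ?thesis by blast
qed

lemma cyc_sorted:
  assumes "cyc_ordered (xs # ts)"
  shows "distinct (xs # ts) \<and> sorted_wrt (\<lambda>s t. key xs s < key xs t) ts"
proof -
  obtain a b c d ys where det: "a * d - b * c = 1" and inf: "moeb a b c d xs = None"
    and ys: "map (moeb a b c d) ts = map Some ys" and so: "sorted_wrt (<) ys"
    using assms unfolding cyc_ordered_def by auto
  have dist: "distinct (xs # ts)" using assms unfolding cyc_ordered_def by simp
  obtain \<alpha> \<beta> where ab: "\<alpha> > 0" "\<forall>t. t \<noteq> xs \<longrightarrow> moeb a b c d t = Some (\<alpha> * key xs t + \<beta>)"
    using moeb_affine[OF det inf] by blast
  have "map (moeb a b c d) ts = map Some (map (\<lambda>t. \<alpha> * key xs t + \<beta>) ts)"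
    using ab(2) dist by (auto intro!: map_cong)
  hence "ys = map (\<lambda>t. \<alpha> * key xs t + \<beta>) ts" using ys by (metis list.inj_map_strong option.inject)
  hence "sorted_wrt (\<lambda>s t. \<alpha> * key xs s + \<beta> < \<alpha> * key xs t + \<beta>) ts"
    using so by (simp add: sorted_wrt_map)
  hence "sorted_wrt (\<lambda>s t. key xs s < key xs t) ts"
    by (rule sorted_wrt_mono_rel[rotated]) (use ab(1) in auto)
  thus ?thesis using dist by simp
qed

lemma cyc3_iff:
  assumes "distinct [xs, x, c]"
  shows "cyc_ordered [xs, x, c] \<longleftrightarrow> key xs x < key xs c"
proof
  assume "cyc_ordered [xs, x, c]"
  thus "key xs x < key xs c" using cyc_sorted by fastforce
next
  assume lt: "key xs x < key xs c"
  show "cyc_ordered [xs, x, c]"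
  proof (cases xs)
    case None
    then obtain x' c' where "x = Some x'" "c = Some c'" using assms by (cases x; cases c) auto
    thus ?thesis unfolding cyc_ordered_def using assms lt None
      by (intro conjI exI[of _ 1] exI[of _ 0] exI[of _ 0] exI[of _ 1] exI[of _ "[x', c']"]) (auto simp: moeb_def key_def)
  next
    case (Some x0)
    have m: "moeb 0 (-1) 1 (-x0) t = Some (key xs t)" if "t \<noteq> xs" for t
      using that Some by (cases t) (auto simp: moeb_def key_def kc_def)
    have mm: "map (moeb 0 (-1) 1 (-x0)) [x,c] = map Some [key xs x, key xs c]"
      using m[of x] m[of c] assms by (auto simp: eq_commute)
    have m0: "moeb 0 (-1) 1 (-x0) xs = None" using Some by (simp add: moeb_def)
    show ?thesis unfolding cyc_ordered_def using assms lt mm m0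
      by (intro conjI exI[of _ 0] exI[of _ "-1"] exI[of _ 1] exI[of _ "-x0"] exI[of _ "[key xs x, key xs c]"])
         auto
  qed
qed

lemma key_inj:
  assumes "s \<noteq> xs" "t \<noteq> xs" "key xs s = key xs t" shows "s = t"
proof (cases xs)
  case None thus ?thesis using assms by (cases s; cases t) (auto simp: key_def)
next
  case (Some c)
  thus ?thesis using assms by (cases s; cases t) (auto simp: key_def kc_def field_simps)
qed


definition arc :: "real option \<Rightarrow> real option \<Rightarrow> real option \<Rightarrow> real option set" where
  "arc xs u v = {t. t \<noteq> xs \<and> key xs u < key xs t \<and> key xs t < key xs v}"

lemma kneg_iff: "x \<noteq> c \<Longrightarrow> kc c x < 0 \<longleftrightarrow> x > c"
  unfolding kc_def by (cases "x > c") (auto simp: divide_less_0_iff)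

lemma kpos_iff: "x \<noteq> c \<Longrightarrow> 0 < kc c x \<longleftrightarrow> x < c"
  unfolding kc_def by (cases "x > c") (auto simp: zero_less_divide_iff)

lemma kmono_iff:
  fixes x y c :: real
  assumes "x \<noteq> c" "y \<noteq> c"
  shows "kc c x < kc c y \<longleftrightarrow> (if (x > c) = (y > c) then x < y else x > c)"
proof -
  consider "x > c" "y > c" | "x > c" "y < c" | "x < c" "y > c" | "x < c" "y < c"
    using assms by (meson linorder_neqE_linordered_idom)
  thus ?thesis
  proof cases
    case 1 thus ?thesis by (simp add: kc_def field_simps)
  next
    case 2
    have "kc c x < 0" "0 < kc c y" using 2 assms kneg_iff kpos_iff by auto
    thus ?thesis using 2 by auto
  next
    case 3
    have "kc c y < 0" "0 < kc c x" using 3 assms kneg_iff kpos_iff by auto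
    thus ?thesis using 3 by auto
  next
    case 4 thus ?thesis by (simp add: kc_def field_simps)
  qed
qed

lemma arc_Some_c:
  assumes "xs = Some c" "x \<noteq> c"
  shows "Some x \<in> arc xs u v \<longleftrightarrow> key xs u < kc c x \<and> kc c x < key xs v"
  using assms by (auto simp: arc_def key_def)

lemma arc_None_c:
  assumes "xs = Some c"
  shows "None \<in> arc xs u v \<longleftrightarrow> key xs u < 0 \<and> 0 < key xs v"
  using assms by (auto simp: arc_def key_def)

lemma arc_cases:
  assumes uxs: "u \<noteq> xs" and vxs: "v \<noteq> xs" and lt: "key xs u < key xs v"
  shows "(\<exists>a b. u = Some a \<and> v = Some b \<and> a < b \<and> arc xs u v = Some ` {a<..<b}) \<or>
         (\<exists>a b. u = Some a \<and> v = Some b \<and> b < a \<and> arc xs u v = insert None (Some ` ({a<..} \<union> {..<b}))) \<or>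
         (\<exists>b. u = None \<and> v = Some b \<and> arc xs u v = Some ` {..<b}) \<or>
         (\<exists>a. u = Some a \<and> v = None \<and> arc xs u v = Some ` {a<..})"
proof (cases xs)
  case None
  then obtain a b where ab: "u = Some a" "v = Some b" using uxs vxs by (cases u; cases v) auto
  hence "a < b" using lt None by (simp add: key_def)
  moreover have "arc xs u v = Some ` {a<..<b}"
  proof (rule set_eqI)
    fix t show "t \<in> arc xs u v \<longleftrightarrow> t \<in> Some ` {a<..<b}"
      using None ab by (cases t) (auto simp: arc_def key_def)
  qed
  ultimately show ?thesis using ab by blast
next
  case (Some c)
  have uc: "u \<noteq> Some c" "v \<noteq> Some c" using uxs vxs Some by auto
  have cc: "Some c \<notin> arc xs u v" using Some by (simp add: arc_def)
  show ?thesis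
  proof (cases u)
    case None
    then obtain b where b: "v = Some b" using lt Some by (cases v) (auto simp: key_def)
    have bc: "b \<noteq> c" using uc b by auto
    have kb: "key xs v = kc c b" "key xs u = 0" using Some b None by (auto simp: key_def)
    have "b < c" using lt kb kpos_iff[OF bc] by simp
    have "arc xs u v = Some ` {..<b}"
    proof (rule set_eqI)
      fix t show "t \<in> arc xs u v \<longleftrightarrow> t \<in> Some ` {..<b}"
      proof (cases t)
        case None thus ?thesis using arc_None_c[OF Some] kb by auto
      next
        case (Some x)
        show ?thesis
        proof (cases "x = c")
          case True thus ?thesis using Some cc \<open>b < c\<close> by auto
        next
          case False
          have "Some x \<in> arc xs u v \<longleftrightarrow> 0 < kc c x \<and> kc c x < kc c b"
            using arc_Some_c[OF \<open>xs = Some c\<close> False] kb by simp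
          also have "\<dots> \<longleftrightarrow> x < b"
            using kpos_iff[OF False] kmono_iff[OF False bc] \<open>b < c\<close> by auto
          finally show ?thesis using Some by (simp add: inj_image_mem_iff)
        qed
      qed
    qed
    thus ?thesis using None b by blast
  next
    case (Some a)
    have ac: "a \<noteq> c" using uc Some by auto
    show ?thesis
    proof (cases v)
      case None
      have ka: "key xs u = kc c a" "key xs v = 0" using \<open>xs = Some c\<close> \<open>u = Some a\<close> None by (auto simp: key_def)
      have "a > c" using lt ka kneg_iff[OF ac] by simp
      have "arc xs u v = Some ` {a<..}"
      proof (rule set_eqI)
        fix t show "t \<in> arc xs u v \<longleftrightarrow> t \<in> Some ` {a<..}"
        proof (cases t)
          case None thus ?thesis using arc_None_c[OF \<open>xs = Some c\<close>] ka by auto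
        next
          case (Some x)
          show ?thesis
          proof (cases "x = c")
            case True thus ?thesis using Some cc \<open>a > c\<close> by auto
          next
            case False
            have "Some x \<in> arc xs u v \<longleftrightarrow> kc c a < kc c x \<and> kc c x < 0"
              using arc_Some_c[OF \<open>xs = Some c\<close> False] ka by simp
            also have "\<dots> \<longleftrightarrow> a < x"
              using kneg_iff[OF False] kmono_iff[OF ac False] \<open>a > c\<close> by auto
            finally show ?thesis using Some by (simp add: inj_image_mem_iff)
          qed
        qed
      qed
      thus ?thesis using None Some by blast
    next
      case (Some b)
      have bc: "b \<noteq> c" using uc Some by auto
      have kab: "key xs u = kc c a" "key xs v = kc c b" using \<open>xs = Some c\<close> \<open>u = Some a\<close> Some by (auto simp: key_def)
      have kab': "kc c a < kc c b" using lt kab by simp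
      show ?thesis
      proof (cases "(a > c) = (b > c)")
        case True
        hence ab: "a < b" using kab' kmono_iff[OF ac bc] by simp
        have "arc xs u v = Some ` {a<..<b}"
        proof (rule set_eqI)
          fix t show "t \<in> arc xs u v \<longleftrightarrow> t \<in> Some ` {a<..<b}"
          proof (cases t)
            case None
            have "\<not> (kc c a < 0 \<and> 0 < kc c b)" using True kneg_iff[OF ac] kpos_iff[OF bc] ab by auto
            thus ?thesis using None arc_None_c[OF \<open>xs = Some c\<close>] kab by auto
          next
            case (Some x)
            show ?thesis
            proof (cases "x = c")
              case True thus ?thesis using Some cc ab \<open>(a > c) = (b > c)\<close> ac bc by auto
            next
              case False
              have "Some x \<in> arc xs u v \<longleftrightarrow> kc c a < kc c x \<and> kc c x < kc c b"
                using arc_Some_c[OF \<open>xs = Some c\<close> False] kab by simp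
              also have "\<dots> \<longleftrightarrow> a < x \<and> x < b"
                using kmono_iff[OF ac False] kmono_iff[OF False bc] True ab ac bc False by auto
              finally show ?thesis using Some by (simp add: inj_image_mem_iff)
            qed
          qed
        qed
        thus ?thesis using \<open>u = Some a\<close> Some ab by blast
      next
        case False
        hence ab: "a > c" "b < c" using kab' kmono_iff[OF ac bc] ac bc by (auto split: if_splits)
        have "arc xs u v = insert None (Some ` ({a<..} \<union> {..<b}))"
        proof (rule set_eqI)
          fix t show "t \<in> arc xs u v \<longleftrightarrow> t \<in> insert None (Some ` ({a<..} \<union> {..<b}))"
          proof (cases t)
            case None
            have "kc c a < 0 \<and> 0 < kc c b" using kneg_iff[OF ac] kpos_iff[OF bc] ab by auto
            thus ?thesis using None arc_None_c[OF \<open>xs = Some c\<close>] kab by auto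
          next
            case (Some x)
            show ?thesis
            proof (cases "x = c")
              case True thus ?thesis using Some cc ab by auto
            next
              case False
              have "Some x \<in> arc xs u v \<longleftrightarrow> kc c a < kc c x \<and> kc c x < kc c b"
                using arc_Some_c[OF \<open>xs = Some c\<close> False] kab by simp
              also have "\<dots> \<longleftrightarrow> a < x \<or> x < b"
                using kmono_iff[OF ac False] kmono_iff[OF False bc] ab False by auto
              also have "\<dots> \<longleftrightarrow> Some x \<in> insert None (Some ` ({a<..} \<union> {..<b}))"
                by (simp add: inj_image_mem_iff)
              finally show ?thesis using Some by blast
            qed
          qed
        qed
        moreover have "b < a" using ab by linarith
        ultimately have "\<exists>a b. u = Some a \<and> v = Some b \<and> b < a \<and> arc xs u v = insert None (Some ` ({a<..} \<union> {..<b}))"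
          using \<open>u = Some a\<close> Some by blast
        thus ?thesis by (intro disjI2 disjI1)
      qed
    qed
  qed
qed




lemma sgn_div_real: "sgn ((a::real) / b) = sgn a * sgn b"
  by (cases b "0::real" rule: linorder_cases) auto

locale rrf =
  fixes F :: ratfun
  assumes F_nz: "F \<noteq> 0" and F_real: "rf_real F"
begin

definition P :: "real poly" where "P = map_poly Re (num F)"
definition Q :: "real poly" where "Q = map_poly Re (den F)"

lemma numP: "num F = ofr P" unfolding P_def using real_coeffs(1)[OF F_real] by (rule ofr_Re[symmetric])
lemma denQ: "den F = ofr Q" unfolding Q_def using real_coeffs(2)[OF F_real] by (rule ofr_Re[symmetric])
lemma P0: "P \<noteq> 0" using num_nz[OF F_nz] numP ofr_eq0 by metis
lemma Q0: "Q \<noteq> 0" using den_nz[of F] denQ ofr_eq0 by metis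
lemma lcQ: "lead_coeff Q = 1" using den_monic[of F] unfolding denQ lead_ofr by simp
lemma noroot: "poly P x = 0 \<Longrightarrow> poly Q x \<noteq> 0"
  using num_den_noroot[of F "of_real x"] by (auto simp: numP denQ poly_ofr)

lemma eval_fin: "rf_eval F (Some (complex_of_real x)) =
   (if poly Q x = 0 then None else Some (complex_of_real (poly P x / poly Q x)))"
  by (simp add: rf_eval_def numP denQ poly_ofr)

lemma eval_inf: "rf_eval F None = (if degree P > degree Q then None else if degree P < degree Q then Some 0
   else Some (complex_of_real (lead_coeff P / lead_coeff Q)))"
  by (simp add: rf_eval_def numP denQ degree_ofr coeff_map_poly)

lemma absord: "zero_div F z + polar_div F z = \<bar>rf_ord F z\<bar>"
proof (cases "rf_const F")
  case True
  then obtain c where c: "F = Fraction_Field.Fract [:c:] 1" unfolding rf_const_def by blast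
  have c0: "c \<noteq> 0" using F_nz c by (auto simp: fract_collapse)
  have "reduced [:c:] 1" using c0 by (simp add: reduced_def)
  hence "num F = [:c:] \<and> den F = 1" using num_den_eq c by blast
  hence "rf_ord F z = 0" using c0 by (cases z) (auto simp: rf_ord_def order_0I)
  thus ?thesis using True by (simp add: zero_div_def polar_div_def)
next
  case False thus ?thesis by (simp add: zero_div_def polar_div_def)
qed

definition RS :: "real set" where "RS = {r. poly P r = 0 \<or> poly Q r = 0}"
lemma RS_fin: "finite RS"
proof -
  have "RS = {r. poly P r = 0} \<union> {r. poly Q r = 0}" by (auto simp: RS_def)
  thus ?thesis using poly_roots_finite[OF P0] poly_roots_finite[OF Q0] by simp
qed

definition w :: "real \<Rightarrow> nat" where "w r = order r P + order r Q"

fun ordw :: "real option \<Rightarrow> nat" where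
  "ordw (Some x) = w x"
| "ordw None = nat \<bar>int (degree Q) - int (degree P)\<bar>"

lemma ordw: "\<bar>rf_ord F (emb t)\<bar> = int (ordw t)"
proof (cases t)
  case None thus ?thesis by (simp add: emb_def rf_ord_def numP denQ degree_ofr)
next
  case (Some x)
  have "order x P = 0 \<or> order x Q = 0"
  proof (cases "poly P x = 0")
    case True thus ?thesis using noroot[of x] by (simp add: order_0I)
  next
    case False thus ?thesis by (simp add: order_0I)
  qed
  thus ?thesis using Some by (auto simp: emb_def rf_ord_def numP denQ order_ofr P0 Q0 w_def)
qed

lemma w_out: "x \<notin> RS \<Longrightarrow> w x = 0"
  by (auto simp: RS_def w_def order_0I)

definition Rg :: "real \<Rightarrow> nat" where "Rg x = (\<Sum>r\<in>{r\<in>RS. x < r}. w r)"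
definition Rl :: "real \<Rightarrow> nat" where "Rl x = (\<Sum>r\<in>{r\<in>RS. r < x}. w r)"

lemma sum_conv:
  fixes R :: "real poly" assumes "R = P \<or> R = Q"
  shows "(\<Sum>r\<in>{r. poly R r = 0 \<and> C r}. order r R) = (\<Sum>r\<in>{r\<in>RS. C r}. order r R)"
proof (rule sum.mono_neutral_left)
  show "finite {r\<in>RS. C r}" using RS_fin by simp
  show "{r. poly R r = 0 \<and> C r} \<subseteq> {r\<in>RS. C r}" using assms by (auto simp: RS_def)
  show "\<forall>i\<in>{r\<in>RS. C r} - {r. poly R r = 0 \<and> C r}. order i R = 0"
  proof
    fix i assume "i \<in> {r\<in>RS. C r} - {r. poly R r = 0 \<and> C r}"
    hence "poly R i \<noteq> 0" by auto
    thus "order i R = 0" by (rule order_0I)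
  qed
qed

lemma sgn_right: assumes "poly P x \<noteq> 0" "poly Q x \<noteq> 0"
  shows "sgn (poly P x / poly Q x) = sgn (lead_coeff P) * (-1) ^ Rg x"
proof -
  have 1: "sgn (poly P x) = sgn (lead_coeff P) * (-1) ^ (\<Sum>r\<in>{r\<in>RS. x < r}. order r P)"
    using sgn_poly_right[OF P0 assms(1)] sum_conv[of P] by simp
  have 2: "sgn (poly Q x) = (-1) ^ (\<Sum>r\<in>{r\<in>RS. x < r}. order r Q)"
    using sgn_poly_right[OF Q0 assms(2)] sum_conv[of Q] lcQ by simp
  have "Rg x = (\<Sum>r\<in>{r\<in>RS. x < r}. order r P) + (\<Sum>r\<in>{r\<in>RS. x < r}. order r Q)"
    by (simp add: Rg_def w_def sum.distrib)
  thus ?thesis using 1 2 sgn_div_real[of "poly P x" "poly Q x"] by (simp del: sgn_divide add: power_add mult_ac)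
qed

lemma sgn_left: assumes "poly P x \<noteq> 0" "poly Q x \<noteq> 0"
  shows "sgn (poly P x / poly Q x) = sgn (lead_coeff P) * (-1) ^ (degree P + degree Q) * (-1) ^ Rl x"
proof -
  have 1: "sgn (poly P x) = sgn (lead_coeff P) * (-1) ^ degree P * (-1) ^ (\<Sum>r\<in>{r\<in>RS. r < x}. order r P)"
    using sgn_poly_left[OF P0 assms(1)] sum_conv[of P] by simp
  have 2: "sgn (poly Q x) = (-1) ^ degree Q * (-1) ^ (\<Sum>r\<in>{r\<in>RS. r < x}. order r Q)"
    using sgn_poly_left[OF Q0 assms(2)] sum_conv[of Q] lcQ by simp
  have "Rl x = (\<Sum>r\<in>{r\<in>RS. r < x}. order r P) + (\<Sum>r\<in>{r\<in>RS. r < x}. order r Q)"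
    by (simp add: Rl_def w_def sum.distrib)
  thus ?thesis using 1 2 sgn_div_real[of "poly P x" "poly Q x"] by (simp del: sgn_divide add: power_add mult_ac)
qed

lemma pt_fin:
  assumes "rf_eval F (emb (Some x)) = Some (complex_of_real s)" "s = 1 \<or> s = -1"
  shows "poly P x \<noteq> 0 \<and> poly Q x \<noteq> 0 \<and> sgn (poly P x / poly Q x) = s \<and> x \<notin> RS"
proof -
  have q: "poly Q x \<noteq> 0" and e: "poly P x / poly Q x = s"
    using assms(1) by (auto simp: emb_def eval_fin simp del: of_real_divide split: if_splits)
  have "poly P x \<noteq> 0" using e assms(2) by auto
  thus ?thesis using q e assms(2) by (auto simp: RS_def)
qed

lemma pt_inf:
  assumes "rf_eval F (emb None) = Some (complex_of_real s)" "s = 1 \<or> s = -1"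
  shows "degree P = degree Q \<and> sgn (lead_coeff P) = s"
proof -
  from assms have d: "degree P = degree Q"
    and e: "complex_of_real (lead_coeff P / lead_coeff Q) = complex_of_real s"
    by (auto simp: emb_def eval_inf simp del: of_real_divide split: if_splits)
  hence "lead_coeff P = s" using lcQ by (simp del: of_real_divide)
  thus ?thesis using d assms(2) by auto
qed


definition Zr :: "real option set" where "Zr = insert None (Some ` RS)"

lemma Zr_fin: "finite Zr" using RS_fin by (simp add: Zr_def)

lemma ordw_out: "t \<notin> Zr \<Longrightarrow> ordw t = 0"
  by (cases t) (auto simp: Zr_def w_out inj_image_mem_iff)

lemma sum_Some: "(\<Sum>t\<in>{t\<in>Zr. t \<in> Some ` I}. ordw t) = (\<Sum>r\<in>{r\<in>RS. r \<in> I}. w r)"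
proof -
  have "{t\<in>Zr. t \<in> Some ` I} = Some ` {r\<in>RS. r \<in> I}" by (auto simp: Zr_def)
  thus ?thesis by (simp add: sum.reindex)
qed

lemma sum_union: assumes "I1 \<inter> I2 = {}"
  shows "(\<Sum>r\<in>{r\<in>RS. r \<in> I1 \<union> I2}. w r) = (\<Sum>r\<in>{r\<in>RS. r \<in> I1}. w r) + (\<Sum>r\<in>{r\<in>RS. r \<in> I2}. w r)"
proof -
  have "{r\<in>RS. r \<in> I1 \<union> I2} = {r\<in>RS. r \<in> I1} \<union> {r\<in>RS. r \<in> I2}" by auto
  moreover have "finite {r\<in>RS. r \<in> I1}" "finite {r\<in>RS. r \<in> I2}" using RS_fin by auto
  ultimately show ?thesis using assms by (simp add: sum.union_disjoint disjoint_iff)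
qed

lemma L_pm: "sgn (lead_coeff P) = 1 \<or> sgn (lead_coeff P) = -1"
  using P0 by (auto simp: sgn_if)

lemma ordw_None_parity: "even (ordw None) \<longleftrightarrow> even (degree P + degree Q)"
  by (cases "degree P \<le> degree Q") (auto simp: nat_diff_distrib' nat_abs_int_diff)

lemma m1sq: "(-1::real) ^ k * (-1) ^ k = 1"
  by (simp add: power_mult_distrib[symmetric])

lemma m1par: "even a = even b \<Longrightarrow> (-1::real) ^ a = (-1) ^ b"
  by (simp add: minus_one_power_iff)

lemma arc_parity:
  assumes uxs: "u \<noteq> xs" and vxs: "v \<noteq> xs" and lt: "key xs u < key xs v"
    and u: "rf_eval F (emb u) = Some (complex_of_real su)" "su = 1 \<or> su = -1"
    and v: "rf_eval F (emb v) = Some (complex_of_real sv)" "sv = 1 \<or> sv = -1"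
  shows "su * sv = (-1) ^ (\<Sum>t\<in>{t\<in>Zr. t \<in> arc xs u v}. ordw t)"
proof -
  define L where "L = sgn (lead_coeff P)"
  have L: "L = 1 \<or> L = -1" using L_pm by (simp add: L_def)
  hence LL: "L * L = 1" by auto
  from arc_cases[OF uxs vxs lt] show ?thesis
  proof (elim disjE exE conjE)
    fix a b assume i: "u = Some a" "v = Some b" "a < b" "arc xs u v = Some ` {a<..<b}"
    have pa: "poly P a \<noteq> 0 \<and> poly Q a \<noteq> 0 \<and> sgn (poly P a / poly Q a) = su \<and> a \<notin> RS"
      using pt_fin u i by simp
    have pb: "poly P b \<noteq> 0 \<and> poly Q b \<noteq> 0 \<and> sgn (poly P b / poly Q b) = sv \<and> b \<notin> RS"
      using pt_fin v i by simp
    have su: "su = L * (-1) ^ Rg a" using sgn_right[of a] pa by (simp add: L_def)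
    have sv: "sv = L * (-1) ^ Rg b" using sgn_right[of b] pb by (simp add: L_def)
    define N where "N = (\<Sum>r\<in>{r\<in>RS. r \<in> {a<..<b}}. w r)"
    have N: "(\<Sum>t\<in>{t\<in>Zr. t \<in> arc xs u v}. ordw t) = N" using i by (simp add: sum_Some N_def)
    have "{r\<in>RS. a < r} = {r\<in>RS. r \<in> {a<..<b} \<union> {b<..}}"
    proof (rule set_eqI)
      fix r
      have "r \<in> RS \<Longrightarrow> r \<noteq> b" using pb by auto
      thus "r \<in> {r\<in>RS. a < r} \<longleftrightarrow> r \<in> {r\<in>RS. r \<in> {a<..<b} \<union> {b<..}}" using i(3) by auto
    qed
    moreover have "(\<Sum>r\<in>{r\<in>RS. r \<in> {a<..<b} \<union> {b<..}}. w r) = N + Rg b"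
      unfolding N_def Rg_def by (subst sum_union) auto
    ultimately have "Rg a = N + Rg b" unfolding Rg_def by simp
    hence "su * sv = (L * L) * ((-1) ^ N * ((-1) ^ Rg b * (-1) ^ Rg b))" using su sv by (simp add: power_add mult_ac)
    thus ?thesis using N LL m1sq by simp
  next
    fix a b assume ii: "u = Some a" "v = Some b" "b < a" "arc xs u v = insert None (Some ` ({a<..} \<union> {..<b}))"
    have pa: "poly P a \<noteq> 0 \<and> poly Q a \<noteq> 0 \<and> sgn (poly P a / poly Q a) = su \<and> a \<notin> RS"
      using pt_fin u ii by simp
    have pb: "poly P b \<noteq> 0 \<and> poly Q b \<noteq> 0 \<and> sgn (poly P b / poly Q b) = sv \<and> b \<notin> RS"
      using pt_fin v ii by simp
    have su: "su = L * (-1) ^ Rg a" using sgn_right[of a] pa by (simp add: L_def)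
    have sv: "sv = L * (-1) ^ (degree P + degree Q) * (-1) ^ Rl b" using sgn_left[of b] pb by (simp add: L_def)
    have "{t\<in>Zr. t \<in> arc xs u v} = insert None {t\<in>Zr. t \<in> Some ` ({a<..} \<union> {..<b})}"
      using ii by (auto simp: Zr_def)
    hence "(\<Sum>t\<in>{t\<in>Zr. t \<in> arc xs u v}. ordw t) = ordw None + (\<Sum>r\<in>{r\<in>RS. r \<in> {a<..} \<union> {..<b}}. w r)"
      using Zr_fin by (simp add: sum_Some)
    also have "\<dots> = ordw None + Rg a + Rl b"
      using ii(3) by (subst sum_union) (auto simp: Rg_def Rl_def)
    finally have N: "(\<Sum>t\<in>{t\<in>Zr. t \<in> arc xs u v}. ordw t) = ordw None + Rg a + Rl b" .
    have "su * sv = (L * L) * ((-1) ^ (degree P + degree Q) * (-1) ^ Rg a * (-1) ^ Rl b)" using su sv by (simp add: mult_ac)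
    also have "(-1) ^ (degree P + degree Q) = ((-1::real) ^ ordw None)" using ordw_None_parity m1par by metis
    finally show ?thesis using N LL by (simp add: power_add)
  next
    fix b assume iii: "u = None" "v = Some b" "arc xs u v = Some ` {..<b}"
    have "rf_eval F (emb None) = Some (complex_of_real su)" using u(1) iii(1) by simp
    from pt_inf[OF this u(2)] have pu: "degree P = degree Q \<and> L = su" unfolding L_def .
    have pb: "poly P b \<noteq> 0 \<and> poly Q b \<noteq> 0 \<and> sgn (poly P b / poly Q b) = sv \<and> b \<notin> RS"
      using pt_fin v iii by simp
    have sv: "sv = L * (-1) ^ (degree P + degree Q) * (-1) ^ Rl b" using sgn_left[of b] pb by (simp add: L_def)
    have N: "(\<Sum>t\<in>{t\<in>Zr. t \<in> arc xs u v}. ordw t) = Rl b" using iii by (simp add: sum_Some Rl_def)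
    have "su * sv = (L * L) * ((-1) ^ degree Q * (-1) ^ degree Q) * (-1) ^ Rl b" using sv pu by (simp add: power_add mult_ac)
    thus ?thesis using N LL m1sq by simp
  next
    fix a assume iv: "u = Some a" "v = None" "arc xs u v = Some ` {a<..}"
    have "rf_eval F (emb None) = Some (complex_of_real sv)" using v(1) iv(2) by simp
    from pt_inf[OF this v(2)] have pv: "degree P = degree Q \<and> L = sv" unfolding L_def .
    have pa: "poly P a \<noteq> 0 \<and> poly Q a \<noteq> 0 \<and> sgn (poly P a / poly Q a) = su \<and> a \<notin> RS"
      using pt_fin u iv by simp
    have su: "su = L * (-1) ^ Rg a" using sgn_right[of a] pa by (simp add: L_def)
    have N: "(\<Sum>t\<in>{t\<in>Zr. t \<in> arc xs u v}. ordw t) = Rg a" using iv by (simp add: sum_Some Rg_def)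
    have "su * sv = (L * L) * (-1) ^ Rg a" using su pv by (simp add: mult_ac)
    thus ?thesis using N LL by simp
  qed
qed

end




definition W0 :: "ratfun \<Rightarrow> complex option set" where
  "W0 F = insert None (Some ` ({w. poly (num F) w = 0} \<union> {w. poly (den F) w = 0}))"

lemma W0_fin: "F \<noteq> 0 \<Longrightarrow> finite (W0 F)"
  using poly_roots_finite[OF num_nz] poly_roots_finite[OF den_nz] by (simp add: W0_def)

lemma zd_Some: assumes "F \<noteq> 0" "\<not> rf_const F"
  shows "zero_div F (Some w) = int (order w (num F))"
proof (cases "poly (num F) w = 0")
  case True
  hence "order w (den F) = 0" using num_den_noroot[of F w] by (simp add: order_0I)
  thus ?thesis using assms by (simp add: zero_div_def rf_ord_def)
next
  case False
  hence "order w (num F) = 0" by (simp add: order_0I)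
  thus ?thesis using assms by (simp add: zero_div_def rf_ord_def)
qed

lemma pd_Some: assumes "F \<noteq> 0" "\<not> rf_const F"
  shows "polar_div F (Some w) = int (order w (den F))"
proof (cases "poly (den F) w = 0")
  case True
  hence "order w (num F) = 0" using num_den_noroot[of F w] by (simp add: order_0I)
  thus ?thesis using assms by (simp add: polar_div_def rf_ord_def)
next
  case False
  hence "order w (den F) = 0" by (simp add: order_0I)
  thus ?thesis using assms by (simp add: polar_div_def rf_ord_def)
qed

lemma zd_out: assumes "F \<noteq> 0" "z \<notin> W0 F" shows "zero_div F z = 0"
proof (cases "rf_const F")
  case True thus ?thesis by (simp add: zero_div_def)
next
  case False
  from assms(2) obtain w where z: "z = Some w" "poly (num F) w \<noteq> 0" by (cases z) (auto simp: W0_def)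
  thus ?thesis using zd_Some[OF assms(1) False] by (simp add: order_0I)
qed

lemma pd_out: assumes "F \<noteq> 0" "z \<notin> W0 F" shows "polar_div F z = 0"
proof (cases "rf_const F")
  case True thus ?thesis by (simp add: polar_div_def)
next
  case False
  from assms(2) obtain w where z: "z = Some w" "poly (den F) w \<noteq> 0" by (cases z) (auto simp: W0_def)
  thus ?thesis using pd_Some[OF assms(1) False] by (simp add: order_0I)
qed

lemma zd_pd_sum:
  assumes F0: "F \<noteq> 0" and fin: "finite W" and sub: "W0 F \<subseteq> W"
  shows "(\<Sum>z\<in>W. zero_div F z) = (\<Sum>z\<in>W. polar_div F z)"
proof (cases "rf_const F")
  case True thus ?thesis by (simp add: zero_div_def polar_div_def)
next
  case False
  define V where "V = {w. poly (num F) w = 0} \<union> {w. poly (den F) w = 0}"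
  have Vfin: "finite V" using poly_roots_finite[OF num_nz[OF F0]] poly_roots_finite[OF den_nz] by (simp add: V_def)
  have W0V: "W0 F = insert None (Some ` V)" by (simp add: W0_def V_def)
  have nV: "None \<notin> Some ` V" by auto
  have "(\<Sum>z\<in>W. zero_div F z) = (\<Sum>z\<in>W0 F. zero_div F z)"
    by (rule sum.mono_neutral_right[OF fin sub]) (use zd_out[OF F0] in auto)
  also have "\<dots> = zero_div F None + (\<Sum>w\<in>V. zero_div F (Some w))"
    unfolding W0V using Vfin nV by (simp add: sum.reindex)
  also have "(\<Sum>w\<in>V. zero_div F (Some w)) = int (\<Sum>w\<in>V. order w (num F))"
    using zd_Some[OF F0 False] by simp
  also have "(\<Sum>w\<in>V. order w (num F)) = degree (num F)"
    by (rule sum_order_complex[OF num_nz[OF F0] Vfin]) (auto simp: V_def)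
  finally have 1: "(\<Sum>z\<in>W. zero_div F z) = max 0 (int (degree (den F)) - int (degree (num F))) + int (degree (num F))"
    using False by (simp add: zero_div_def rf_ord_def)
  have "(\<Sum>z\<in>W. polar_div F z) = (\<Sum>z\<in>W0 F. polar_div F z)"
    by (rule sum.mono_neutral_right[OF fin sub]) (use pd_out[OF F0] in auto)
  also have "\<dots> = polar_div F None + (\<Sum>w\<in>V. polar_div F (Some w))"
    unfolding W0V using Vfin nV by (simp add: sum.reindex)
  also have "(\<Sum>w\<in>V. polar_div F (Some w)) = int (\<Sum>w\<in>V. order w (den F))"
    using pd_Some[OF F0 False] by simp
  also have "(\<Sum>w\<in>V. order w (den F)) = degree (den F)"
    by (rule sum_order_complex[OF den_nz Vfin]) (auto simp: V_def)
  finally have 2: "(\<Sum>z\<in>W. polar_div F z) = max 0 (- (int (degree (den F)) - int (degree (num F)))) + int (degree (den F))"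
    using False by (simp add: polar_div_def rf_ord_def)
  show ?thesis using 1 2 by linarith
qed

lemma D0_total:
  assumes F0: "F \<noteq> 0" and fin: "finite W" and sub: "W0 F \<subseteq> W"
    and Dsub: "{z. D z \<noteq> 0} \<subseteq> W" and Ddeg: "deg_div D = int n"
  shows "(\<Sum>z\<in>W. zero_div F z + D z - polar_div F z) = int n"
proof -
  have "(\<Sum>z\<in>W. D z) = deg_div D"
    unfolding deg_div_def by (rule sum.mono_neutral_left[symmetric, OF fin Dsub]) auto
  thus ?thesis using zd_pd_sum[OF F0 fin sub] Ddeg by (simp add: sum.distrib sum_subtractf)
qed




lemma m1powi: "(-1::real) powi e = (if even e then 1 else -1)"
proof (cases "e \<ge> 0")
  case True
  then obtain k where "e = int k" by (metis nonneg_int_cases)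
  thus ?thesis by (simp add: minus_one_power_iff)
next
  case False
  then obtain k where k: "e = - int k" by (metis linorder_not_le neg_int_cases less_imp_le)
  have "(-1::real) powi e = (-1) powi (int k)" unfolding k by (rule power_int_minus_one_minus)
  thus ?thesis using k by (simp add: minus_one_power_iff)
qed

lemma emb_inj: "inj emb"
  unfolding emb_def by (rule injI) (auto simp: option.map_sel option.map_disc_iff intro: option.expand)

lemma emb_simps [simp]: "emb None = None" "emb (Some x) = Some (complex_of_real x)"
  by (simp_all add: emb_def)

lemma sign_fun_key:
  assumes "x \<noteq> xs" "D (emb x) = 0"
  shows "sign_fun D xs x = (\<Sum>c\<in>{c. D (emb c) \<noteq> 0 \<and> c \<noteq> xs}. D (emb c) * (if key xs x < key xs c then 1 else 0))"
  unfolding sign_fun_def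
proof (rule sum.cong[OF refl])
  fix c assume c: "c \<in> {c. D (emb c) \<noteq> 0 \<and> c \<noteq> xs}"
  hence "distinct [xs, x, c]" using assms by auto
  hence "x \<in> halfopen_arc xs c \<longleftrightarrow> key xs x < key xs c"
    using assms(1) by (simp add: halfopen_arc_def open_arc_def cyc3_iff)
  thus "D (emb c) * (if x \<in> halfopen_arc xs c then 1 else 0) =
        D (emb c) * (if key xs x < key xs c then 1 else 0)" by simp
qed

lemma sign_diff:
  assumes uxs: "u \<noteq> xs" and vxs: "v \<noteq> xs" and Du: "D (emb u) = 0" and Dv: "D (emb v) = 0"
    and lt: "key xs u < key xs v" and fin: "finite {c. D (emb c) \<noteq> 0 \<and> c \<noteq> xs}"
  shows "sign_fun D xs u - sign_fun D xs v = (\<Sum>c\<in>{c\<in>{c. D (emb c) \<noteq> 0 \<and> c \<noteq> xs}. c \<in> arc xs u v}. D (emb c))"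
proof -
  let ?C = "{c. D (emb c) \<noteq> 0 \<and> c \<noteq> xs}"
  have "sign_fun D xs u - sign_fun D xs v =
     (\<Sum>c\<in>?C. D (emb c) * (if key xs u < key xs c then 1 else 0) - D (emb c) * (if key xs v < key xs c then 1 else 0))"
    using sign_fun_key[of u xs D, OF uxs Du] sign_fun_key[of v xs D, OF vxs Dv] by (simp add: sum_subtractf)
  also have "\<dots> = (\<Sum>c\<in>?C. if c \<in> arc xs u v then D (emb c) else 0)"
  proof (rule sum.cong[OF refl])
    fix c assume c: "c \<in> ?C"
    have "c \<noteq> v" using c Dv by auto
    hence "key xs c \<noteq> key xs v" using key_inj[of c xs v] c vxs by auto
    thus "D (emb c) * (if key xs u < key xs c then 1 else 0) - D (emb c) * (if key xs v < key xs c then 1 else 0) =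
        (if c \<in> arc xs u v then D (emb c) else 0)"
      using c lt by (auto simp: arc_def)
  qed
  also have "\<dots> = (\<Sum>c\<in>{c\<in>?C. c \<in> arc xs u v}. D (emb c))"
    by (rule sum.inter_filter[OF fin, symmetric])
  finally show ?thesis .
qed


theorem theorem2p4:
  fixes E :: "real option set" and n :: nat and Dinf :: divisor and xstar :: "real option"
    and F :: ratfun and pts :: "real option list"
  assumes E_compact: "compact_ext E"
    and E_proper: "E \<noteq> UNIV"
    and E_infinite: "infinite E"
    and n_pos: "n \<ge> 1"
    and D_nonneg: "\<forall>z. Dinf z \<ge> 0"
    and D_fin: "finite {z. Dinf z \<noteq> 0}"
    and D_deg: "deg_div Dinf = int n"
    and D_supp: "\<forall>z. Dinf z \<noteq> 0 \<longrightarrow> (\<exists>x. z = emb x \<and> x \<notin> E)"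
    and xstar: "xstar \<notin> E"
    and F_L: "F \<in> Lspace Dinf"
    and F_real: "rf_real F"
    and F_norm: "\<forall>x\<in>E. (case rf_eval F (emb x) of None \<Rightarrow> False | Some v \<Rightarrow> cmod v \<le> 1)"
    and F_nz: "F \<noteq> 0"
    and alt: "alternation_set E Dinf xstar F pts"
  shows "int (length pts) \<le> int n + 1 - (zero_div F (emb xstar) + Dinf (emb xstar) - polar_div F (emb xstar))"
proof -
  interpret R: rrf F using F_nz F_real by unfold_locales
  define m where "m = length pts"
  define D0 where "D0 z = zero_div F z + Dinf z - polar_div F z" for z
  have zd_nn: "zero_div F z \<ge> 0" for z by (simp add: zero_div_def)
  have pd_le: "polar_div F z \<le> Dinf z" for z using F_L by (simp add: Lspace_def)
  have D0nn: "D0 z \<ge> 0" for z using zd_nn[of z] pd_le[of z] by (simp add: D0_def)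
  from alt have ptsE: "set pts \<subseteq> E" and cyc: "cyc_ordered (xstar # pts)"
    and val: "\<forall>j<length pts. rf_eval F (emb (pts!j)) = Some (complex_of_real ((-1) powi
        (int (length pts) - int (j+1) - sign_fun Dinf xstar (pts!j))))"
    unfolding alternation_set_def by auto
  from cyc_sorted[OF cyc] have sorted: "sorted_wrt (\<lambda>s t. key xstar s < key xstar t) pts" by auto
  have Dpts: "Dinf (emb t) = 0" if "t \<in> E" for t
  proof (rule ccontr)
    assume "Dinf (emb t) \<noteq> 0"
    then obtain x where "emb t = emb x" "x \<notin> E" using D_supp by blast
    hence "t = x" using emb_inj by (simp add: inj_eq)
    thus False using that \<open>x \<notin> E\<close> by simp
  qed
  have Dxs_fin: "finite {c. Dinf (emb c) \<noteq> 0}"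
    using finite_vimageI[OF D_fin emb_inj] by (simp add: vimage_def)
  define C where "C = {c. Dinf (emb c) \<noteq> 0 \<and> c \<noteq> xstar}"
  have Cfin: "finite C" using Dxs_fin by (simp add: C_def)
  define A where "A j = arc xstar (pts!j) (pts!Suc j)" for j
  have key_lt: "key xstar (pts!i) < key xstar (pts!k)" if "i < k" "k < m" for i k
    using sorted that by (simp add: sorted_wrt_iff_nth_less m_def)

  have ex: "\<exists>t\<in>A j. D0 (emb t) \<noteq> 0" if jm: "Suc j < m" for j
  proof (rule ccontr)
    assume "\<not> (\<exists>t\<in>A j. D0 (emb t) \<noteq> 0)"
    hence all0: "D0 (emb t) = 0" if "t \<in> A j" for t using that by blast
    define u where "u = pts!j"
    define v where "v = pts!Suc j"
    have uE: "u \<in> E" "v \<in> E" using ptsE jm by (auto simp: u_def v_def m_def)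
    have uxs: "u \<noteq> xstar" "v \<noteq> xstar" using uE xstar by auto
    have Du: "Dinf (emb u) = 0" "Dinf (emb v) = 0" using Dpts uE by auto
    have lt: "key xstar u < key xstar v" using key_lt[of j "Suc j"] jm by (simp add: u_def v_def)
    define Su where "Su = sign_fun Dinf xstar u"
    define Sv where "Sv = sign_fun Dinf xstar v"
    define su where "su = (-1::real) powi (int m - int (j+1) - Su)"
    define sv where "sv = (-1::real) powi (int m - int (Suc j + 1) - Sv)"
    have valu: "rf_eval F (emb u) = Some (complex_of_real su)"
      using val jm by (simp add: u_def su_def Su_def m_def)
    have valv: "rf_eval F (emb v) = Some (complex_of_real sv)"
      using val jm by (simp add: v_def sv_def Sv_def m_def)
    have su_pm: "su = 1 \<or> su = -1" by (simp add: su_def m1powi)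
    have sv_pm: "sv = 1 \<or> sv = -1" by (simp add: sv_def m1powi)
    define N where "N = (\<Sum>t\<in>{t\<in>R.Zr. t \<in> A j}. R.ordw t)"
    have par: "su * sv = (-1) ^ N"
      using R.arc_parity[OF uxs lt valu su_pm valv sv_pm] by (simp add: A_def u_def v_def N_def)
    have sd: "Su - Sv = (\<Sum>c\<in>{c\<in>C. c \<in> A j}. Dinf (emb c))"
      using sign_diff[of u xstar v Dinf, OF uxs Du lt] Cfin by (simp add: Su_def Sv_def C_def A_def u_def v_def)
    have on_arc: "int (R.ordw t) = Dinf (emb t)" if "t \<in> A j" for t
    proof -
      have "D0 (emb t) = 0" using all0 that .
      hence "zero_div F (emb t) = 0" "polar_div F (emb t) = Dinf (emb t)"
        using zd_nn[of "emb t"] pd_le[of "emb t"] by (auto simp: D0_def)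
      thus ?thesis using R.absord[of "emb t"] R.ordw[of t] by simp
    qed
    define B where "B = {t \<in> R.Zr \<union> C. t \<in> A j}"
    have Bfin: "finite B" using R.Zr_fin Cfin by (simp add: B_def)
    have "int N = (\<Sum>t\<in>{t\<in>R.Zr. t \<in> A j}. int (R.ordw t))" by (simp add: N_def)
    also have "\<dots> = (\<Sum>t\<in>B. int (R.ordw t))"
    proof (rule sum.mono_neutral_left[OF Bfin])
      show "{t\<in>R.Zr. t \<in> A j} \<subseteq> B" by (auto simp: B_def)
      show "\<forall>i\<in>B - {t\<in>R.Zr. t \<in> A j}. int (R.ordw i) = 0"
      proof
        fix i assume "i \<in> B - {t\<in>R.Zr. t \<in> A j}"
        hence "i \<notin> R.Zr" by (auto simp: B_def)
        thus "int (R.ordw i) = 0" using R.ordw_out by simp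
      qed
    qed
    also have "\<dots> = (\<Sum>t\<in>B. Dinf (emb t))" by (rule sum.cong) (auto simp: B_def on_arc)
    also have "\<dots> = (\<Sum>c\<in>{c\<in>C. c \<in> A j}. Dinf (emb c))"
      by (rule sum.mono_neutral_right[OF Bfin]) (auto simp: B_def C_def A_def arc_def)
    finally have eqN: "int N = Su - Sv" using sd by simp
    have "even (int m - int (j+1) - Su) = even (int m - int (Suc j + 1) - Sv) \<longleftrightarrow> \<not> even (Su - Sv)"
      by presburger
    moreover have "even N \<longleftrightarrow> even (Su - Sv)" using eqN by (metis even_of_nat)
    ultimately show False using par unfolding su_def sv_def m1powi
      by (cases "even (int m - int (j+1) - Su)"; cases "even (int m - int (Suc j + 1) - Sv)")
         (auto simp: minus_one_power_iff)
  qed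

  define Wd where "Wd = W0 F \<union> {z. Dinf z \<noteq> 0}"
  have Wdfin: "finite Wd" using W0_fin[OF F_nz] D_fin by (simp add: Wd_def)
  have D0_supp: "z \<in> Wd" if "D0 z \<noteq> 0" for z
    using that zd_out[OF F_nz] pd_out[OF F_nz] by (auto simp: D0_def Wd_def)
  define T where "T j = {t \<in> A j. D0 (emb t) \<noteq> 0}" for j
  have Tfin: "finite (T j)" for j
  proof -
    have "T j \<subseteq> emb -` Wd" using D0_supp by (auto simp: T_def)
    thus ?thesis using finite_vimageI[OF Wdfin emb_inj] finite_subset by blast
  qed
  have Tge: "1 \<le> (\<Sum>t\<in>T j. D0 (emb t))" if jm: "Suc j < m" for j
  proof -
    obtain t where t: "t \<in> A j" "D0 (emb t) \<noteq> 0" using ex[OF jm] by blast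
    hence "t \<in> T j" by (simp add: T_def)
    hence "D0 (emb t) \<le> (\<Sum>t\<in>T j. D0 (emb t))"
      by (intro member_le_sum Tfin) (use D0nn in auto)
    moreover have "1 \<le> D0 (emb t)" using t(2) D0nn[of "emb t"] by linarith
    ultimately show ?thesis by linarith
  qed
  have disj: "A i \<inter> A k = {}" if "i < k" "Suc k < m" for i k
  proof -
    have le: "key xstar (pts!Suc i) \<le> key xstar (pts!k)"
    proof (cases "Suc i = k")
      case True thus ?thesis by simp
    next
      case False thus ?thesis using key_lt[of "Suc i" k] that by simp
    qed
    show ?thesis using le by (auto simp: A_def arc_def)
  qed
  define I where "I = {j. Suc j < m}"
  have I: "I = {..<m - 1}" by (auto simp: I_def)
  define TT where "TT = (\<Union>j\<in>I. T j)"
  have TTfin: "finite TT" using Tfin by (simp add: TT_def I)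
  have "(\<Sum>t\<in>TT. D0 (emb t)) = (\<Sum>j\<in>I. \<Sum>t\<in>T j. D0 (emb t))"
    unfolding TT_def
  proof (rule sum.UNION_disjoint)
    show "finite I" by (simp add: I)
    show "\<forall>i\<in>I. finite (T i)" using Tfin by blast
    show "\<forall>i\<in>I. \<forall>k\<in>I. i \<noteq> k \<longrightarrow> T i \<inter> T k = {}"
    proof (intro ballI impI)
      fix i k assume ik: "i \<in> I" "k \<in> I" "i \<noteq> k"
      show "T i \<inter> T k = {}"
      proof (cases "i < k")
        case True thus ?thesis using disj[of i k] ik by (auto simp: T_def I_def)
      next
        case False hence "k < i" using ik by simp
        thus ?thesis using disj[of k i] ik by (auto simp: T_def I_def)
      qed
    qed
  qed
  moreover have "(\<Sum>j\<in>I. (1::int)) \<le> (\<Sum>j\<in>I. \<Sum>t\<in>T j. D0 (emb t))"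
    by (rule sum_mono) (use Tge in \<open>auto simp: I_def\<close>)
  ultimately have TTge: "int (m - 1) \<le> (\<Sum>t\<in>TT. D0 (emb t))" by (simp add: I)
  have xsTT: "xstar \<notin> TT" by (auto simp: TT_def T_def A_def arc_def)
  define W' where "W' = Wd \<union> emb ` insert xstar TT"
  have W'fin: "finite W'" using Wdfin TTfin by (simp add: W'_def)
  have "D0 (emb xstar) + (\<Sum>t\<in>TT. D0 (emb t)) = (\<Sum>t\<in>insert xstar TT. D0 (emb t))"
    using TTfin xsTT by simp
  also have "\<dots> = (\<Sum>z\<in>emb ` insert xstar TT. D0 z)"
    using sum.reindex[OF inj_on_subset[OF emb_inj subset_UNIV], of D0 "insert xstar TT"] by (simp add: comp_def)
  also have "\<dots> \<le> (\<Sum>z\<in>W'. D0 z)"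
    by (rule sum_mono2[OF W'fin]) (auto simp: W'_def D0nn)
  also have "\<dots> = int n" unfolding D0_def
    by (rule D0_total[OF F_nz W'fin _ _ D_deg]) (auto simp: W'_def Wd_def)
  finally have "D0 (emb xstar) + int (m - 1) \<le> int n" using TTge by linarith
  thus ?thesis unfolding D0_def m_def by linarith
qed


end
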